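(* There exists a family of $T$-round DRACC instances whose corresponding Dd-MDPs do not admit a deterministic chasing oracle with chasing regret $o(T)$.
   Context: DRACC problem: $N$ resources, $T$ users arriving in rounds $t=1,\dots,T$. Resource $i$ is active in rounds $t_a(i)\le t\le t_e(i)$ with capacity $c(i)\in\mathbb{Z}_{>0}$ on arrival; $A_t$ is the set of active resources; $C\ge\max_ic(i)$, $W\ge\max_t|A_t|$. User $t$ has valuation $v_t:2^{A_t}\to[0,1)$, $v_t(\emptyset)=0$. Posting $\bm p\in(0,1]^{A_t}$ to user $t$ sells one unit of each resource in $\hat A^{\bm p}_t=\arg\max_{A\subseteq A_t}\{v_t(A)-\sum_{i\in A}\bm p(i)\}$ (lexicographic ties) at payment $\hat q^{\bm p}_t=\sum_{i\in\hat A^{\bm p}_t}\bm p(i)$; $v_t$ is revealed after posting. Inventory vectors $\bm\lambda_t\in\{0,\dots,C\}^{A_t}$: $\bm\lambda_t(i)=c(i)$ if $t_a(i)=t$; $\bm\lambda_{t+1}(i)=\bm\lambda_t(i)-\mathbb{1}[i\in\hat A^{\bm p_t}_t]$ for $i\in A_t\cap A_{t+1}$. $\bm p$ is feasible for $\bm\lambda$ if $\bm p(i)=1$ whenever $\bm\lambda(i)=0$. A pricing policy maps inventory vectors to feasible price vectors. Instance data are chosen by an adaptive adversary. Corresponding Dd-MDP: states are inventory vectors, feasible actions are feasible price vectors, reward $f_t(s,x)=\hat q^x_t$, transition $g_t(s,x)=s'$ with $s'(i)=s(i)-\mathbb{1}[i\in\hat A^x_t]$ for $i\in A_{t+1}\cap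 A_t$, $s'(i)=c(i)$ for $i\in A_{t+1}\setminus A_t$. Policy simulation: $s^\gamma_1=s_1$, $x^\gamma_t=\gamma(s^\gamma_t)$, $s^\gamma_{t+1}=g_t(s^\gamma_t,x^\gamma_t)$. Chasing oracle: given a target policy $\gamma$, it is invoked at some round $t_{\mathrm{init}}$ with an arbitrary initial state $s_{\mathrm{init}}$ and outputs, in each round $t\ge t_{\mathrm{init}}$ up to a halting round $t_{\mathrm{final}}$, an action $\hat x(t)$ feasible for $\hat s(t)$, where $\hat s(t_{\mathrm{init}})=s_{\mathrm{init}}$ and $\hat s(t)=g_{t-1}(\hat s(t-1),\hat x(t-1))$; after each round it observes $g_t,f_t$. Its chasing regret is $\sum_{t=t_{\mathrm{init}}}^{t_{\mathrm{final}}}f_t(s^\gamma_t,x^\gamma_t)-\sum_{t=t_{\mathrm{init}}}^{t_{\mathrm{final}}}\mathbb{E}[f_t(\hat s(t),\hat x(t))]$. It is deterministic if its outputs are deterministic functions of its inputs and observations. *)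

theory Defs
  imports Complex_Main "HOL-Library.List_Lexorder"
begin

text \<open>Resources are 0,...,nres-1; rounds are 1,...,T.\<close>
record inst =
  nres :: nat
  ta   :: "nat \<Rightarrow> nat"
  te   :: "nat \<Rightarrow> nat"
  cap  :: "nat \<Rightarrow> nat"
  val  :: "nat \<Rightarrow> nat set \<Rightarrow> real"

definition act :: "inst \<Rightarrow> nat \<Rightarrow> nat set" where
  "act I t = {i. i < nres I \<and> ta I i \<le> t \<and> t \<le> te I i}"

definition valid_inst :: "nat \<Rightarrow> nat \<Rightarrow> nat \<Rightarrow> inst \<Rightarrow> bool" where
  "valid_inst C W T I \<longleftrightarrow>
     (\<forall>i < nres I. 1 \<le> ta I i \<and> ta I i \<le> te I i \<and> te I i \<le> T \<and> 0 < cap I i \<and> cap I i \<le> C)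
   \<and> (\<forall>t \<in> {1..T}. card (act I t) \<le> W)
   \<and> (\<forall>t \<in> {1..T}. val I t {} = 0 \<and> (\<forall>A \<subseteq> act I t. 0 \<le> val I t A \<and> val I t A < 1))"

type_synonym state = "nat \<Rightarrow> nat option"   (* inventory vector with domain A_t *)
type_synonym price = "nat \<Rightarrow> real"

definition utility :: "inst \<Rightarrow> nat \<Rightarrow> price \<Rightarrow> nat set \<Rightarrow> real" where
  "utility I t p A = val I t A - (\<Sum>i\<in>A. p i)"

definition maxsets :: "inst \<Rightarrow> nat \<Rightarrow> price \<Rightarrow> nat set set" where
  "maxsets I t p = {A. A \<subseteq> act I t \<and> (\<forall>B. B \<subseteq> act I t \<longrightarrow> utility I t p B \<le> utility I t p A)}"

text \<open>Demanded bundle: utility maximiser, ties broken lexicographically.\<close>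
definition sold :: "inst \<Rightarrow> nat \<Rightarrow> price \<Rightarrow> nat set" where
  "sold I t p = (ARG_MIN sorted_list_of_set A. A \<in> maxsets I t p)"

definition payment :: "inst \<Rightarrow> nat \<Rightarrow> price \<Rightarrow> real" where
  "payment I t p = (\<Sum>i\<in>sold I t p. p i)"

definition feasible :: "state \<Rightarrow> price \<Rightarrow> bool" where
  "feasible s p \<longleftrightarrow> (\<forall>i\<in>dom s. 0 < p i \<and> p i \<le> 1 \<and> (s i = Some 0 \<longrightarrow> p i = 1))"

definition target_policy :: "(state \<Rightarrow> price) \<Rightarrow> bool" where
  "target_policy \<gamma> \<longleftrightarrow> (\<forall>s. feasible s (\<gamma> s))"

definition valid_state :: "nat \<Rightarrow> inst \<Rightarrow> nat \<Rightarrow> state \<Rightarrow> bool" where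
  "valid_state C I t s \<longleftrightarrow> dom s = act I t \<and> (\<forall>i n. s i = Some n \<longrightarrow> n \<le> C)"

definition rew :: "inst \<Rightarrow> nat \<Rightarrow> state \<Rightarrow> price \<Rightarrow> real" where
  "rew I t s x = payment I t x"

definition trans :: "inst \<Rightarrow> nat \<Rightarrow> state \<Rightarrow> price \<Rightarrow> state" where
  "trans I t s x = (\<lambda>i. if i \<in> act I (Suc t) then
       (if i \<in> act I t then map_option (\<lambda>n. n - (if i \<in> sold I t x then 1 else 0)) (s i)
        else Some (cap I i))
     else None)"

definition init_state :: "inst \<Rightarrow> state" where
  "init_state I = (\<lambda>i. if i \<in> act I 1 then Some (cap I i) else None)"

text \<open>Policy simulation: pstate I g k is the state s^g_{k+1}.\<close>
primrec pstate :: "inst \<Rightarrow> (state \<Rightarrow> price) \<Rightarrow> nat \<Rightarrow> state" where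
  "pstate I \<gamma> 0 = init_state I"
| "pstate I \<gamma> (Suc k) = trans I (Suc k) (pstate I \<gamma> k) (\<gamma> (pstate I \<gamma> k))"

definition gstate :: "inst \<Rightarrow> (state \<Rightarrow> price) \<Rightarrow> nat \<Rightarrow> state" where
  "gstate I \<gamma> t = pstate I \<gamma> (t - 1)"

type_synonym obs = "(state \<Rightarrow> price \<Rightarrow> state) \<times> (state \<Rightarrow> price \<Rightarrow> real)"

text \<open>A deterministic chasing oracle: its output in round t is a function of the horizon T,
  the target policy, t_init, s_init and the observations (g_s, f_s) of rounds t_init..t-1.\<close>
type_synonym chaser = "nat \<Rightarrow> (state \<Rightarrow> price) \<Rightarrow> nat \<Rightarrow> state \<Rightarrow> obs list \<Rightarrow> price"

definition hist :: "inst \<Rightarrow> nat \<Rightarrow> nat \<Rightarrow> obs list" where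
  "hist I t0 k = map (\<lambda>j. (trans I (t0 + j), rew I (t0 + j))) [0..<k]"

text \<open>ostate ... k is the oracle's state hat-s(t0+k).\<close>
primrec ostate :: "chaser \<Rightarrow> inst \<Rightarrow> nat \<Rightarrow> (state \<Rightarrow> price) \<Rightarrow> nat \<Rightarrow> state \<Rightarrow> nat \<Rightarrow> state" where
  "ostate Q I T \<gamma> t0 s0 0 = s0"
| "ostate Q I T \<gamma> t0 s0 (Suc k) =
     trans I (t0 + k) (ostate Q I T \<gamma> t0 s0 k) (Q T \<gamma> t0 s0 (hist I t0 k))"

definition oact :: "chaser \<Rightarrow> inst \<Rightarrow> nat \<Rightarrow> (state \<Rightarrow> price) \<Rightarrow> nat \<Rightarrow> state \<Rightarrow> nat \<Rightarrow> price" where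
  "oact Q I T \<gamma> t0 s0 k = Q T \<gamma> t0 s0 (hist I t0 k)"

definition chasing_regret ::
  "chaser \<Rightarrow> inst \<Rightarrow> nat \<Rightarrow> (state \<Rightarrow> price) \<Rightarrow> nat \<Rightarrow> nat \<Rightarrow> state \<Rightarrow> real" where
  "chasing_regret Q I T \<gamma> t0 tf s0 =
     (\<Sum>t = t0..tf. rew I t (gstate I \<gamma> t) (\<gamma> (gstate I \<gamma> t)))
   - (\<Sum>t = t0..tf. rew I t (ostate Q I T \<gamma> t0 s0 (t - t0)) (oact Q I T \<gamma> t0 s0 (t - t0)))"

definition chaser_feasible :: "nat \<Rightarrow> (nat \<Rightarrow> inst set) \<Rightarrow> chaser \<Rightarrow> bool" where
  "chaser_feasible C F Q \<longleftrightarrow>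
     (\<forall>T. \<forall>I\<in>F T. \<forall>\<gamma> t0 s0 k. target_policy \<gamma> \<and> valid_state C I t0 s0 \<and> 1 \<le> t0 \<and> t0 + k \<le> T
        \<longrightarrow> feasible (ostate Q I T \<gamma> t0 s0 k) (oact Q I T \<gamma> t0 s0 k))"

end

theory Submission
  imports Defs
begin

lemma maxsets_ne:
  assumes "finite (act I t)"
  shows "maxsets I t p \<noteq> {}"
proof -
  have f: "finite (Pow (act I t))" "Pow (act I t) \<noteq> {}" using assms by auto
  obtain A where "is_arg_min (\<lambda>A. - utility I t p A) (\<lambda>x. x \<in> Pow (act I t)) A"
    using ex_is_arg_min_if_finite[OF f, of "\<lambda>A. - utility I t p A"] by (elim exE)
  then have h: "A \<subseteq> act I t" "\<And>B. B \<subseteq> act I t \<Longrightarrow> \<not> (- utility I t p B < - utility I t p A)"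
    unfolding is_arg_min_def by auto
  have "A \<in> maxsets I t p" unfolding maxsets_def using h(1) h(2) by (simp add: not_less)
  then show ?thesis by blast
qed

lemma sold_in:
  assumes "finite (act I t)"
  shows "sold I t p \<in> maxsets I t p"
proof -
  have sb: "maxsets I t p \<subseteq> Pow (act I t)" unfolding maxsets_def by auto
  have "finite (Pow (act I t))" using assms by simp
  then have "finite (maxsets I t p)" by (rule finite_subset[OF sb])
  then have "\<exists>A. is_arg_min sorted_list_of_set (\<lambda>x. x \<in> maxsets I t p) A"
    by (rule ex_is_arg_min_if_finite[OF _ maxsets_ne[OF assms]])
  then have "is_arg_min sorted_list_of_set (\<lambda>x. x \<in> maxsets I t p) (sold I t p)"
    unfolding sold_def arg_min_def by (rule someI_ex)
  then show ?thesis by (simp add: is_arg_min_def)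
qed

lemma sub2: "A \<subseteq> {a, b} \<longleftrightarrow> A = {} \<or> A = {a} \<or> A = {b} \<or> A = {a, b}"
proof
  assume "A \<subseteq> {a, b}"
  then have e: "A = (if a \<in> A then {a} else {}) \<union> (if b \<in> A then {b} else {})" by auto
  show "A = {} \<or> A = {a} \<or> A = {b} \<or> A = {a, b}"
  proof (cases "a \<in> A"; cases "b \<in> A")
    assume "a \<in> A" "b \<in> A" then have "A = {a} \<union> {b}" using e by simp
    then show ?thesis by (simp add: insert_commute)
  next
    assume "a \<in> A" "b \<notin> A" then have "A = {a}" using e by simp
    then show ?thesis by simp
  next
    assume "a \<notin> A" "b \<in> A" then have "A = {b}" using e by simp
    then show ?thesis by simp
  next
    assume "a \<notin> A" "b \<notin> A" then have "A = {}" using e by simp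
    then show ?thesis by simp
  qed
qed auto


lemma round_facts:
  assumes act: "act I t = {0, t}" and t0: "t \<noteq> 0"
    and val: "val I t = (\<lambda>A. if t \<in> A then w else 0)"
    and S: "S \<in> maxsets I t p"
  shows "S = {} \<or> S = {0} \<or> S = {t} \<or> S = {0, t}"
    and "0 \<in> S \<Longrightarrow> p 0 \<le> 0"
    and "t \<in> S \<Longrightarrow> p t \<le> w"
    and "S = {} \<Longrightarrow> w \<le> p t"
proof -
  have m: "S \<subseteq> act I t \<and> (\<forall>B. B \<subseteq> act I t \<longrightarrow> utility I t p B \<le> utility I t p S)"
    using S unfolding maxsets_def by simp
  have sub: "S \<subseteq> {0,t}" using m act by simp
  have mx: "\<And>B. B \<subseteq> {0,t} \<Longrightarrow> utility I t p B \<le> utility I t p S" using m act by simp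
  have u: "utility I t p {} = 0" "utility I t p {0} = - p 0" "utility I t p {t} = w - p t"
    "utility I t p {0,t} = w - p 0 - p t"
    using t0 unfolding utility_def val by simp_all
  have mx0: "0 \<le> utility I t p S" using mx[of "{}"] u by simp
  have mx1: "- p 0 \<le> utility I t p S" using mx[of "{0}"] u by simp
  have mx2: "w - p t \<le> utility I t p S" using mx[of "{t}"] u by simp
  show cs: "S = {} \<or> S = {0} \<or> S = {t} \<or> S = {0, t}" using sub unfolding sub2 .
  show "0 \<in> S \<Longrightarrow> p 0 \<le> 0"
    using cs proof (elim disjE)
    qed (use mx0 mx2 u t0 in auto)
  show "t \<in> S \<Longrightarrow> p t \<le> w"
    using cs proof (elim disjE)
    qed (use mx0 mx1 u t0 in auto)
  show "S = {} \<Longrightarrow> w \<le> p t"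
    using mx2 u by auto
qed

lemma round_pay:
  assumes act: "act I t = {0, t}" and t0: "t \<noteq> 0"
    and val: "val I t = (\<lambda>A. if t \<in> A then w else 0)"
  shows "payment I t p \<le> (if p t \<le> w then max (p t) 0 else 0)"
    and "p 0 > 0 \<Longrightarrow> 0 \<notin> sold I t p"
    and "p 0 > 0 \<Longrightarrow> w > p t \<Longrightarrow> payment I t p = p t"
    and "p 0 > 0 \<Longrightarrow> w < p t \<Longrightarrow> payment I t p = 0"
proof -
  have S: "sold I t p \<in> maxsets I t p" using act by (intro sold_in) simp
  note F = round_facts[OF act t0 val S]
  have pay: "sold I t p = {} \<Longrightarrow> payment I t p = 0"
    "sold I t p = {0} \<Longrightarrow> payment I t p = p 0"
    "sold I t p = {t} \<Longrightarrow> payment I t p = p t"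
    "sold I t p = {0, t} \<Longrightarrow> payment I t p = p 0 + p t"
    using t0 unfolding payment_def by simp_all
  have r0: "0 \<le> (if p t \<le> w then max (p t) 0 else 0)" by simp
  consider (a) "sold I t p = {}" | (b) "sold I t p = {0}" | (c) "sold I t p = {t}"
    | (d) "sold I t p = {0, t}" using F(1) by blast
  note cs = this
  show "payment I t p \<le> (if p t \<le> w then max (p t) 0 else 0)"
  proof (cases rule: cs)
    case a then show ?thesis using pay(1) r0 by simp
  next
    case b then have "p 0 \<le> 0" using F(2) by simp
    then show ?thesis using pay(2)[OF b] r0 by linarith
  next
    case c then have "p t \<le> w" using F(3) by simp
    then show ?thesis using pay(3)[OF c] by simp
  next
    case d then have "p t \<le> w" "p 0 \<le> 0" using F(2,3) by simp_all
    then show ?thesis using pay(4)[OF d] by simp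
  qed
  show n0: "p 0 > 0 \<Longrightarrow> 0 \<notin> sold I t p" using F(2) by force
  show "p 0 > 0 \<Longrightarrow> w > p t \<Longrightarrow> payment I t p = p t"
  proof (cases rule: cs)
    case a then show "w > p t \<Longrightarrow> ?thesis" using F(4) by simp
  next
    case b then show "p 0 > 0 \<Longrightarrow> ?thesis" using n0 by simp
  next
    case c then show ?thesis using pay(3) by simp
  next
    case d then show "p 0 > 0 \<Longrightarrow> ?thesis" using n0 by simp
  qed
  show "p 0 > 0 \<Longrightarrow> w < p t \<Longrightarrow> payment I t p = 0"
  proof (cases rule: cs)
    case a then show ?thesis using pay(1) by simp
  next
    case b then show "p 0 > 0 \<Longrightarrow> ?thesis" using n0 by simp
  next
    case c then show "w < p t \<Longrightarrow> ?thesis" using F(3) by simp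
  next
    case d then show "p 0 > 0 \<Longrightarrow> ?thesis" using n0 by simp
  qed
qed


definition mk :: "nat \<Rightarrow> (nat \<Rightarrow> real) \<Rightarrow> bool \<Rightarrow> inst" where
  "mk T v b = \<lparr>nres = Suc T, ta = (\<lambda>i. if i = 0 then 1 else i), te = (\<lambda>i. if i = 0 then T else i),
     cap = (\<lambda>_. 1),
     val = (\<lambda>t A. if t = 1 then (if b \<and> 0 \<in> A then 9/10 else 0) else (if t \<in> A then v t else 0))\<rparr>"

lemma act_mk: "1 \<le> t \<Longrightarrow> t \<le> T \<Longrightarrow> act (mk T v b) t = {0, t}"
  unfolding act_def mk_def by auto

lemma act_mk_indep: "act (mk T v b) = act (mk T v' b')"
  unfolding act_def mk_def by (simp add: fun_eq_iff)

lemma cap_mk[simp]: "cap (mk T v b) = (\<lambda>_. 1)" by (simp add: mk_def)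

lemma val_mk: "t \<noteq> 1 \<Longrightarrow> val (mk T v b) t = (\<lambda>A. if t \<in> A then v t else 0)"
  by (simp add: mk_def)

lemma val_mk1: "val (mk T v b) 1 = (\<lambda>A. if b \<and> 0 \<in> A then 9/10 else 0)"
  by (simp add: mk_def)

lemma sold_cong: "act I = act I' \<Longrightarrow> val I t = val I' t \<Longrightarrow> sold I t = sold I' t"
  unfolding sold_def maxsets_def utility_def by (simp add: fun_eq_iff)

lemma trans_cong: "t \<noteq> 1 \<Longrightarrow> v t = v' t \<Longrightarrow> trans (mk T v b) t = trans (mk T v' b') t"
proof -
  assume a: "t \<noteq> 1" "v t = v' t"
  have s: "sold (mk T v b) t = sold (mk T v' b') t"
  proof (rule sold_cong[OF act_mk_indep])
    show "val (mk T v b) t = val (mk T v' b') t" unfolding val_mk[OF a(1)] a(2) ..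
  qed
  show ?thesis unfolding trans_def by (simp add: s act_mk_indep[of T v b v' b'] fun_eq_iff)
qed

lemma rew_cong: "t \<noteq> 1 \<Longrightarrow> v t = v' t \<Longrightarrow> rew (mk T v b) t = rew (mk T v' b') t"
proof -
  assume a: "t \<noteq> 1" "v t = v' t"
  have s: "sold (mk T v b) t = sold (mk T v' b') t"
  proof (rule sold_cong[OF act_mk_indep])
    show "val (mk T v b) t = val (mk T v' b') t" unfolding val_mk[OF a(1)] a(2) ..
  qed
  show ?thesis unfolding rew_def payment_def by (simp add: s fun_eq_iff)
qed

lemma hist_cong: "2 \<le> t0 \<Longrightarrow> (\<And>j. j < k \<Longrightarrow> v (t0 + j) = v' (t0 + j)) \<Longrightarrow>
   hist (mk T v b) t0 k = hist (mk T v' b') t0 k"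
  unfolding hist_def by (auto intro!: map_cong trans_cong rew_cong)

definition gam :: "state \<Rightarrow> price" where
  "gam s i = (if s i = Some 0 then 1 else if i = 0 then 1/2 else if s 0 = Some 0 then 3/4 else 1/4)"

lemma gam_tp: "target_policy gam"
  unfolding target_policy_def feasible_def gam_def by auto

definition adv :: "real \<Rightarrow> real" where
  "adv p = (if p \<le> 3/8 then 7/8 else 5/16)"

primrec vs :: "chaser \<Rightarrow> nat \<Rightarrow> state \<Rightarrow> nat \<Rightarrow> nat \<Rightarrow> real" where
  "vs Q T s0 0 = (\<lambda>_. 0)"
| "vs Q T s0 (Suc k) = (vs Q T s0 k)(2 + k := adv (Q T gam 2 s0 (hist (mk T (vs Q T s0 k) True) 2 k) (2 + k)))"

lemma vs_stable: "t < 2 + k \<Longrightarrow> k \<le> m \<Longrightarrow> vs Q T s0 m t = vs Q T s0 k t"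
  by (induction m) (auto simp: le_Suc_eq)

lemma vs_range: "vs Q T s0 m t \<in> {0, 7/8, 5/16}"
  by (induction m) (auto simp: adv_def)

lemma vs_val: "k < m \<Longrightarrow> vs Q T s0 m (2 + k) = adv (Q T gam 2 s0 (hist (mk T (vs Q T s0 m) b) 2 k) (2 + k))"
proof -
  assume "k < m"
  have "vs Q T s0 m (2 + k) = vs Q T s0 (Suc k) (2 + k)" using \<open>k < m\<close> by (intro vs_stable) auto
  also have "\<dots> = adv (Q T gam 2 s0 (hist (mk T (vs Q T s0 k) True) 2 k) (2 + k))" by simp
  also have "hist (mk T (vs Q T s0 k) True) 2 k = hist (mk T (vs Q T s0 m) b) 2 k"
    using \<open>k < m\<close> by (intro hist_cong) (auto intro!: vs_stable[symmetric])
  finally show ?thesis .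
qed


lemma round1:
  assumes T: "1 \<le> T" and p0: "p 0 = 1/2" and p1: "p 1 = 1/4"
  shows "sold (mk T v b) 1 p = (if b then {0} else {})"
proof -
  let ?I = "mk T v b"
  have act: "act ?I 1 = {0, 1}" using act_mk[OF _ T] by simp
  have S: "sold ?I 1 p \<in> maxsets ?I 1 p" using act by (intro sold_in) simp
  define S where "S = sold ?I 1 p"
  have m: "S \<subseteq> act ?I 1 \<and> (\<forall>B. B \<subseteq> act ?I 1 \<longrightarrow> utility ?I 1 p B \<le> utility ?I 1 p S)"
    using S unfolding maxsets_def S_def by simp
  have sub: "S \<subseteq> {0,1}" using m act by simp
  have mx: "\<And>B. B \<subseteq> {0,1} \<Longrightarrow> utility ?I 1 p B \<le> utility ?I 1 p S" using m act by simp
  have u: "utility ?I 1 p {} = 0" "utility ?I 1 p {0} = (if b then 9/10 else 0) - 1/2"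
    "utility ?I 1 p {1} = - 1/4"
    "utility ?I 1 p {0,1} = (if b then 9/10 else 0) - 3/4"
    unfolding utility_def val_mk1 using p0 p1 by simp_all
  have mx0: "0 \<le> utility ?I 1 p S" using mx[of "{}"] u by simp
  have mx1: "(if b then 9/10 else 0) - 1/2 \<le> utility ?I 1 p S" using mx[of "{0}"] u by simp
  have cs: "S = {} \<or> S = {0} \<or> S = {1} \<or> S = {0, 1}" using sub unfolding sub2 .
  show ?thesis
  proof (cases b)
    case True
    have "S = {0}" using cs
    proof (elim disjE)
      assume "S = {}" then show ?thesis using mx1 u True by simp
    next
      assume "S = {1}" then show ?thesis using mx1 u True by simp
    next
      assume "S = {0,1}" then show ?thesis using mx1 u True by simp
    qed
    then show ?thesis using True S_def by simp
  next
    case False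
    have "S = {}" using cs
    proof (elim disjE)
      assume "S = {0}" then show ?thesis using mx0 u False by simp
    next
      assume "S = {1}" then show ?thesis using mx0 u False by simp
    next
      assume "S = {0,1}" then show ?thesis using mx0 u False by simp
    qed
    then show ?thesis using False S_def by simp
  qed
qed

definition st :: "nat \<Rightarrow> nat \<Rightarrow> state" where
  "st f t = (\<lambda>i. if i = 0 then Some f else if i = t then Some 1 else None)"

lemma gam_st0: "0 < gam (st f t) 0"
  by (simp add: gam_def st_def)

lemma gam_stt: "t \<noteq> 0 \<Longrightarrow> gam (st f t) t = (if f = 0 then 3/4 else 1/4)"
  by (simp add: gam_def st_def)

lemma pstate_st: "1 \<le> k \<Longrightarrow> k + 1 \<le> T \<Longrightarrow> pstate (mk T v b) gam k = st (if b then 0 else 1) (k + 1)"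
proof (induction k)
  case 0 then show ?case by simp
next
  case (Suc k)
  let ?I = "mk T v b"
  show ?case
  proof (cases "k = 0")
    case True
    have T1: "1 \<le> T" using Suc by simp
    have a1: "act ?I 1 = {0, 1}" using act_mk[OF _ T1] by simp
    have a2: "act ?I 2 = {0, 2}" using act_mk[of 2 T] Suc True by simp
    have init: "init_state ?I = (\<lambda>i. if i = 0 \<or> i = 1 then Some 1 else None)"
      unfolding init_state_def a1 by (simp add: fun_eq_iff mk_def)
    have g: "gam (init_state ?I) 0 = 1/2" "gam (init_state ?I) 1 = 1/4"
      unfolding init gam_def by simp_all
    have sd: "sold ?I 1 (gam (init_state ?I)) = (if b then {0} else {})"
      by (rule round1[OF T1 g])
    have e: "pstate ?I gam (Suc k) = trans ?I 1 (init_state ?I) (gam (init_state ?I))"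
      using True by simp
    have e2: "Suc k + 1 = 2" using True by simp
    show ?thesis unfolding e e2
    proof (rule ext)
      fix i
      have a1': "act ?I (Suc 0) = {0, 1}" using a1 by simp
      have a2': "act ?I (Suc (Suc 0)) = {0, 2}" using a2 by (simp add: numeral_2_eq_2)
      show "trans ?I 1 (init_state ?I) (gam (init_state ?I)) i = st (if b then 0 else 1) 2 i"
        unfolding trans_def using a1' a2' sd init
        by (simp add: st_def numeral_2_eq_2)
    qed
  next
    case False
    define f where "f = (if b then 0 else 1::nat)"
    have IH: "pstate ?I gam k = st f (k + 1)" using Suc False f_def by simp
    have a1: "act ?I (Suc k) = {0, Suc k}" using act_mk[of "Suc k" T] Suc by simp
    have a2: "act ?I (Suc (Suc k)) = {0, Suc (Suc k)}" using act_mk[of "Suc (Suc k)" T] Suc by simp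
    have vl: "val ?I (Suc k) = (\<lambda>A. if Suc k \<in> A then v (Suc k) else 0)"
      using False by (intro val_mk) simp
    have n0: "0 \<notin> sold ?I (Suc k) (gam (st f (Suc k)))"
      by (rule round_pay(2)[OF a1 _ vl]) (auto simp: gam_st0)
    show ?thesis unfolding f_def[symmetric] using n0
      by (simp add: IH trans_def a1 a2 st_def fun_eq_iff)
  qed
qed

lemma gstate_st: "2 \<le> t \<Longrightarrow> t \<le> T \<Longrightarrow> gstate (mk T v b) gam t = st (if b then 0 else 1) t"
  unfolding gstate_def using pstate_st[of "t - 1" T v b] by simp


lemma valid_mk: "1 \<le> T \<Longrightarrow> (\<And>t. 0 \<le> v t \<and> v t < 1) \<Longrightarrow> valid_inst 1 2 T (mk T v b)"
proof -
  assume T: "1 \<le> T" and vr: "\<And>t. 0 \<le> v t \<and> v t < 1"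
  have p1: "\<forall>i < nres (mk T v b). 1 \<le> ta (mk T v b) i \<and> ta (mk T v b) i \<le> te (mk T v b) i
      \<and> te (mk T v b) i \<le> T \<and> 0 < cap (mk T v b) i \<and> cap (mk T v b) i \<le> 1"
    using T by (auto simp: mk_def)
  have p2: "\<forall>t \<in> {1..T}. card (act (mk T v b) t) \<le> 2"
  proof
    fix t assume "t \<in> {1..T}"
    then have "act (mk T v b) t = {0, t}" by (intro act_mk) auto
    moreover have "card {0, t} \<le> 2" by (cases "t = 0") auto
    ultimately show "card (act (mk T v b) t) \<le> 2" by simp
  qed
  have p3: "\<forall>t \<in> {1..T}. val (mk T v b) t {} = 0 \<and> (\<forall>A \<subseteq> act (mk T v b) t. 0 \<le> val (mk T v b) t A \<and> val (mk T v b) t A < 1)"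
    using vr by (auto simp: mk_def)
  show ?thesis unfolding valid_inst_def using p1 p2 p3 by blast
qed

lemma card_2T: "card {2..T} = T - 1" by simp

theorem proposition2:
  shows "\<exists>(C::nat) (W::nat) (F :: nat \<Rightarrow> inst set).
     (\<forall>T. \<forall>I\<in>F T. valid_inst C W T I) \<and>
     (\<forall>Q :: chaser. chaser_feasible C F Q \<longrightarrow>
        \<not> (\<forall>\<epsilon>>0. \<forall>\<^sub>F T in sequentially. \<forall>I\<in>F T. \<forall>\<gamma> t0 tf s0.
              target_policy \<gamma> \<and> valid_state C I t0 s0 \<and> 1 \<le> t0 \<and> t0 \<le> tf \<and> tf \<le> T
              \<longrightarrow> chasing_regret Q I T \<gamma> t0 tf s0 \<le> \<epsilon> * real T))"
proof -
  have A: "\<forall>T. \<forall>I\<in>{I. valid_inst 1 2 T I}. valid_inst 1 2 T I" by simp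
  have B: "\<not> (\<forall>\<epsilon>>0. \<forall>\<^sub>F T in sequentially. \<forall>I\<in>{I. valid_inst 1 2 T I}. \<forall>\<gamma> t0 tf s0.
              target_policy \<gamma> \<and> valid_state 1 I t0 s0 \<and> 1 \<le> t0 \<and> t0 \<le> tf \<and> tf \<le> T
              \<longrightarrow> chasing_regret Q I T \<gamma> t0 tf s0 \<le> \<epsilon> * real T)" for Q :: chaser
  proof
    assume H: "\<forall>\<epsilon>>0. \<forall>\<^sub>F T in sequentially. \<forall>I\<in>{I. valid_inst 1 2 T I}. \<forall>\<gamma> t0 tf s0.
              target_policy \<gamma> \<and> valid_state 1 I t0 s0 \<and> 1 \<le> t0 \<and> t0 \<le> tf \<and> tf \<le> T
              \<longrightarrow> chasing_regret Q I T \<gamma> t0 tf s0 \<le> \<epsilon> * real T"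
    have "\<forall>\<^sub>F T in sequentially. \<forall>I\<in>{I. valid_inst 1 2 T I}. \<forall>\<gamma> t0 tf s0.
              target_policy \<gamma> \<and> valid_state 1 I t0 s0 \<and> 1 \<le> t0 \<and> t0 \<le> tf \<and> tf \<le> T
              \<longrightarrow> chasing_regret Q I T \<gamma> t0 tf s0 \<le> (1/20) * real T"
      using mp[OF spec[OF H, of "1/20"]] by simp
    then obtain N where N: "\<And>T. N \<le> T \<Longrightarrow> \<forall>I\<in>{I. valid_inst 1 2 T I}. \<forall>\<gamma> t0 tf s0.
              target_policy \<gamma> \<and> valid_state 1 I t0 s0 \<and> 1 \<le> t0 \<and> t0 \<le> tf \<and> tf \<le> T
              \<longrightarrow> chasing_regret Q I T \<gamma> t0 tf s0 \<le> (1/20) * real T"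
      unfolding eventually_sequentially by blast
    define T where "T = N + 3"
    define s0 :: state where "s0 = (\<lambda>i. if i = 0 \<or> i = 2 then Some 1 else None)"
    define v where "v = vs Q T s0 T"
    have T3: "3 \<le> T" "N \<le> T" unfolding T_def by simp_all
    have vr: "0 \<le> v t \<and> v t < 1" for t
      using vs_range[of Q T s0 T t] unfolding v_def by auto
    have vs_ok: "valid_state 1 (mk T v b) 2 s0" for b
    proof -
      have "act (mk T v b) 2 = {0, 2}" using T3 by (intro act_mk) auto
      then show ?thesis unfolding valid_state_def s0_def by (auto split: if_splits)
    qed
    have R: "chasing_regret Q (mk T v b) T gam 2 T s0 \<le> (1/20) * real T" for b
      using N[OF T3(2)] valid_mk[of T v b] vr gam_tp vs_ok[of b] T3 by auto
    define P where "P t = Q T gam 2 s0 (hist (mk T v True) 2 (t - 2))" for t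
    define G where "G b t = payment (mk T v b) t (gam (st (if b then 0 else 1) t))" for b t
    define Or where "Or b t = payment (mk T v b) t (P t)" for b t
    have reg: "chasing_regret Q (mk T v b) T gam 2 T s0 = (\<Sum>t = 2..T. G b t) - (\<Sum>t = 2..T. Or b t)" for b
    proof -
      have "(\<Sum>t = 2..T. rew (mk T v b) t (gstate (mk T v b) gam t) (gam (gstate (mk T v b) gam t)))
          = (\<Sum>t = 2..T. G b t)"
        by (rule sum.cong) (auto simp: rew_def G_def gstate_st)
      moreover have "(\<Sum>t = 2..T. rew (mk T v b) t (ostate Q (mk T v b) T gam 2 s0 (t - 2)) (oact Q (mk T v b) T gam 2 s0 (t - 2)))
          = (\<Sum>t = 2..T. Or b t)"
      proof (rule sum.cong)
        fix t assume "t \<in> {2..T}"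
        have "hist (mk T v b) 2 (t - 2) = hist (mk T v True) 2 (t - 2)" by (rule hist_cong) auto
        then show "rew (mk T v b) t (ostate Q (mk T v b) T gam 2 s0 (t - 2)) (oact Q (mk T v b) T gam 2 s0 (t - 2)) = Or b t"
          by (simp add: rew_def oact_def Or_def P_def)
      qed simp
      ultimately show ?thesis unfolding chasing_regret_def by simp
    qed
    have round: "1/4 \<le> G True t + G False t - Or True t - Or False t" if t: "t \<in> {2..T}" for t
    proof -
      have t2: "2 \<le> t" "t \<le> T" "t \<noteq> 0" "t \<noteq> 1" using t by auto
      have hv: "v t = adv (P t t)"
      proof -
        have "vs Q T s0 T (2 + (t - 2)) = adv (Q T gam 2 s0 (hist (mk T (vs Q T s0 T) True) 2 (t - 2)) (2 + (t - 2)))"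
          using t2 by (intro vs_val) auto
        moreover have e: "2 + (t - 2) = t" using t2(1) by simp
        ultimately show ?thesis unfolding v_def P_def by (simp only: e)
      qed
      have act: "act (mk T v b) t = {0, t}" for b using t2 by (intro act_mk) auto
      have vl: "val (mk T v b) t = (\<lambda>A. if t \<in> A then v t else 0)" for b using t2 by (intro val_mk) auto
      have Obd: "Or b t \<le> (if P t t \<le> v t then max (P t t) 0 else 0)" for b
        unfolding Or_def by (rule round_pay(1)[OF act t2(3) vl])
      have p0: "0 < gam (st f t) 0" for f by (rule gam_st0)
      have gT: "gam (st (if True then 0 else 1) t) t = 3/4" using gam_stt[OF t2(3)] by simp
      have gF: "gam (st (if False then 0 else 1) t) t = 1/4" using gam_stt[OF t2(3)] by simp
      show ?thesis
      proof (cases "P t t \<le> 3/8")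
        case True
        then have v: "v t = 7/8" using hv by (simp add: adv_def)
        have "G True t = 3/4" unfolding G_def
          using round_pay(3)[where p="gam (st (if True then 0 else 1) t)", OF act[of True] t2(3) vl[of True] p0[of "if True then 0 else 1"]] gT v by simp
        moreover have "G False t = 1/4" unfolding G_def
          using round_pay(3)[where p="gam (st (if False then 0 else 1) t)", OF act[of False] t2(3) vl[of False] p0[of "if False then 0 else 1"]] gF v by simp
        ultimately show ?thesis using Obd[of True] Obd[of False] True v by (auto split: if_splits)
      next
        case False
        then have v: "v t = 5/16" using hv by (simp add: adv_def)
        have "G True t = 0" unfolding G_def
          using round_pay(4)[where p="gam (st (if True then 0 else 1) t)", OF act[of True] t2(3) vl[of True] p0[of "if True then 0 else 1"]] gT v by simp
        moreover have "G False t = 1/4" unfolding G_def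
          using round_pay(3)[where p="gam (st (if False then 0 else 1) t)", OF act[of False] t2(3) vl[of False] p0[of "if False then 0 else 1"]] gF v by simp
        ultimately show ?thesis using Obd[of True] Obd[of False] False v by (auto split: if_splits)
      qed
    qed
    have "(\<Sum>t = 2..T. (1/4::real)) \<le> (\<Sum>t = 2..T. G True t + G False t - Or True t - Or False t)"
      by (rule sum_mono) (rule round)
    also have "\<dots> = chasing_regret Q (mk T v True) T gam 2 T s0 + chasing_regret Q (mk T v False) T gam 2 T s0"
      unfolding reg by (simp add: sum.distrib sum_subtractf)
    also have "\<dots> \<le> (1/10) * real T" using R[of True] R[of False] by simp
    finally have "real (T - 1) / 4 \<le> real T / 10" by simp
    then show False using T3 by (simp add: of_nat_diff)
  qed
  show ?thesis
    apply (rule exI[of _ "1::nat"], rule exI[of _ "2::nat"], rule exI[of _ "\<lambda>T. {I. valid_inst 1 2 T I}"])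
    using A B by blast
qed

end
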